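(* Let $\omega_0\neq 0$ and let $u_x,u_y,u_z$ be arbitrary (bounded measurable) real functions of time. Consider the system $$\dot b_x=-\omega_0c_y-u_zb_y+u_yb_z,\quad \dot b_y=\omega_0c_x+u_zb_x-u_xb_z,\quad \dot b_z=u_xb_y-u_yb_x,$$ $$\dot c_x=-\omega_0b_y+u_yc_z-u_zc_y,\quad \dot c_y=\omega_0b_x-u_xc_z+u_zc_x,\quad \dot c_z=u_xc_y-u_yc_x.$$ Then along every solution the quantities $$E=\frac{\omega_0^2}{2}\sum_{k=x,y,z}(b_k^2+c_k^2),\qquad L=\omega_0\sum_{k=x,y,z}b_kc_k$$ are constant in time.
   Context: Solutions are understood as absolutely continuous real functions $b_k(t),c_k(t)$, $k=x,y,z$, satisfying the equations almost everywhere. *)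

theory Defs
  imports "HOL-Analysis.Analysis"
begin

definition abs_cont_on :: "(real \<Rightarrow> real) \<Rightarrow> real \<Rightarrow> real \<Rightarrow> bool" where
  "abs_cont_on f a b \<longleftrightarrow>
     (\<forall>\<epsilon>>0. \<exists>\<delta>>0. \<forall>(n::nat) (l::nat \<Rightarrow> real) (r::nat \<Rightarrow> real).
        (\<forall>i<n. a \<le> l i \<and> l i \<le> r i \<and> r i \<le> b) \<longrightarrow>
        (\<forall>i<n. \<forall>j<n. i \<noteq> j \<longrightarrow> r i \<le> l j \<or> r j \<le> l i) \<longrightarrow>
        (\<Sum>i<n. r i - l i) < \<delta> \<longrightarrow>
        (\<Sum>i<n. \<bar>f (r i) - f (l i)\<bar>) < \<epsilon>)"

end

theory Submission
  imports Defs
begin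


lemma deriv0_local:
  fixes F :: "real \<Rightarrow> real"
  assumes "(F has_real_derivative 0) (at x)" "e > 0"
  shows "\<exists>r>0. \<forall>y. \<bar>y - x\<bar> < r \<longrightarrow> \<bar>F y - F x\<bar> \<le> e * \<bar>y - x\<bar>"
proof -
  have "((\<lambda>y. (F y - F x) / (y - x)) \<longlongrightarrow> 0) (at x)"
    using assms(1) has_field_derivative_iff by auto
  then obtain s where s: "s > 0" "\<And>y. y \<noteq> x \<Longrightarrow> norm (y - x) < s \<Longrightarrow> norm ((F y - F x) / (y - x) - 0) < e"
    using assms(2) unfolding LIM_eq by meson
  show ?thesis
  proof (intro exI[of _ s] conjI allI impI)
    fix y assume y: "\<bar>y - x\<bar> < s"
    show "\<bar>F y - F x\<bar> \<le> e * \<bar>y - x\<bar>"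
    proof (cases "y = x")
      case False
      then have "\<bar>(F y - F x) / (y - x)\<bar> < e" using s(2)[of y] y by auto
      then have "\<bar>F y - F x\<bar> / \<bar>y - x\<bar> < e" by (simp add: abs_divide)
      then show ?thesis using False by (simp add: divide_less_eq)
    qed simp
  qed (use s in auto)
qed

lemma null_open_cover:
  assumes N: "N \<in> null_sets lebesgue" and d: "(d::real) > 0"
  obtains U where "open U" "N \<subseteq> U" "U \<in> lmeasurable" "measure lebesgue U < d"
proof -
  have Ns: "N \<in> sets lebesgue" using N by (rule null_setsD2)
  obtain T where T: "open T" "N \<subseteq> T" "(T - N) \<in> lmeasurable" "emeasure lebesgue (T - N) < ennreal d"
    using sets_lebesgue_outer_open[OF Ns d] by blast
  have Nl: "N \<in> lmeasurable" using N Ns by (simp add: fmeasurable_def null_setsD1)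
  have eq: "T = (T - N) \<union> N" using T by auto
  have Tl: "T \<in> lmeasurable" using T(3) Nl by (subst eq) (rule fmeasurable.Un)
  have "measure lebesgue T \<le> measure lebesgue (T - N) + measure lebesgue N"
    by (subst eq) (rule measure_Un_le; use T Nl in auto)
  also have "measure lebesgue N = 0" using N by (simp add: measure_eq_0_null_sets)
  also have "measure lebesgue (T - N) < d"
    using T(3,4) by (simp add: emeasure_eq_measure2 ennreal_less_iff)
  finally show ?thesis using that T Tl by auto
qed
lemma acD:
  fixes F :: "real \<Rightarrow> real"
  assumes ac: "abs_cont_on F a b" and e: "e > 0"
  obtains \<delta> where "\<delta> > 0" and "\<And>(n::nat) l r.
        (\<forall>i<n. a \<le> l i \<and> l i \<le> r i \<and> r i \<le> b) \<Longrightarrow>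
        (\<forall>i<n. \<forall>j<n. i \<noteq> j \<longrightarrow> r i \<le> l j \<or> r j \<le> l i) \<Longrightarrow>
        (\<Sum>i<n. r i - l i) < \<delta> \<Longrightarrow>
        (\<Sum>i<n. \<bar>F (r i) - F (l i)\<bar>) < e"
  using ac[unfolded abs_cont_on_def, rule_format, OF e] by blast



lemma ac_zero_deriv_const:
  fixes F :: "real \<Rightarrow> real"
  assumes ab: "a \<le> b" and ac: "abs_cont_on F a b" and N: "N \<in> null_sets lebesgue"
    and der: "\<And>t. t \<in> {a..b} \<Longrightarrow> t \<notin> N \<Longrightarrow> (F has_real_derivative 0) (at t)"
  shows "F b = F a"
proof -
  have main: "\<bar>F b - F a\<bar> \<le> e * (b - a + 1)" if e: "e > 0" for e
  proof -
    obtain \<delta> where \<delta>: "\<delta> > 0" and acd: "\<And>(n::nat) l r.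
        (\<forall>i<n. a \<le> l i \<and> l i \<le> r i \<and> r i \<le> b) \<Longrightarrow>
        (\<forall>i<n. \<forall>j<n. i \<noteq> j \<longrightarrow> r i \<le> l j \<or> r j \<le> l i) \<Longrightarrow>
        (\<Sum>i<n. r i - l i) < \<delta> \<Longrightarrow>
        (\<Sum>i<n. \<bar>F (r i) - F (l i)\<bar>) < e"
      using acD[OF ac e] by blast
    obtain U where U: "open U" "N \<subseteq> U" "U \<in> lmeasurable" "measure lebesgue U < \<delta>"
      using null_open_cover[OF N \<delta>] by blast
    have "\<exists>r>0. (x \<in> N \<longrightarrow> ball x r \<subseteq> U) \<and>
            (x \<notin> N \<and> x \<in> {a..b} \<longrightarrow> (\<forall>y. \<bar>y - x\<bar> < r \<longrightarrow> \<bar>F y - F x\<bar> \<le> e * \<bar>y - x\<bar>))" for x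
    proof (cases "x \<in> N")
      case True
      then obtain r where "r > 0" "ball x r \<subseteq> U" using U(1,2) open_contains_ball by blast
      then show ?thesis using True by blast
    next
      case False
      show ?thesis
      proof (cases "x \<in> {a..b}")
        case True
        then show ?thesis using False deriv0_local[OF der[OF True False] e] by blast
      qed (use False in \<open>auto intro: exI[of _ 1]\<close>)
    qed
    then have "\<forall>x. \<exists>r. r > 0 \<and> (x \<in> N \<longrightarrow> ball x r \<subseteq> U) \<and>
            (x \<notin> N \<and> x \<in> {a..b} \<longrightarrow> (\<forall>y. \<bar>y - x\<bar> < r \<longrightarrow> \<bar>F y - F x\<bar> \<le> e * \<bar>y - x\<bar>))"
      by blast
    from choice[OF this] obtain d where dd: "\<forall>x. d x > 0 \<and> (x \<in> N \<longrightarrow> ball x (d x) \<subseteq> U) \<and>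
            (x \<notin> N \<and> x \<in> {a..b} \<longrightarrow> (\<forall>y. \<bar>y - x\<bar> < d x \<longrightarrow> \<bar>F y - F x\<bar> \<le> e * \<bar>y - x\<bar>))"
      by blast
    have d: "\<And>x. d x > 0" "\<And>x. x \<in> N \<Longrightarrow> ball x (d x) \<subseteq> U"
      "\<And>x y. x \<notin> N \<Longrightarrow> x \<in> {a..b} \<Longrightarrow> \<bar>y - x\<bar> < d x \<Longrightarrow> \<bar>F y - F x\<bar> \<le> e * \<bar>y - x\<bar>"
      using dd by blast+
    define g where "g x = ball x (d x)" for x
    have "gauge g" unfolding g_def gauge_def using d(1) by auto
    then obtain p where p: "p tagged_division_of cbox a b" "g fine p"
      using fine_division_exists by blast
    have pd: "p tagged_division_of {a..b}" using p(1) by simp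
    have finp: "finite p" using pd by blast
    have K: "K = {Inf K..Sup K} \<and> Inf K \<le> x \<and> x \<le> Sup K \<and> a \<le> Inf K \<and> Sup K \<le> b \<and> K \<subseteq> ball x (d x)
        \<and> Henstock_Kurzweil_Integration.content K = Sup K - Inf K \<and> Inf K \<in> ball x (d x) \<and> Sup K \<in> ball x (d x)"
      if xK: "(x, K) \<in> p" for x K
    proof -
      obtain u v where uv: "K = cbox u v" using tagged_division_ofD(4)[OF pd xK] by blast
      have xin: "x \<in> K" using tagged_division_ofD(2)[OF pd xK] .
      have sub: "K \<subseteq> {a..b}" using tagged_division_ofD(3)[OF pd xK] .
      have uv': "u \<le> v" "K = {u..v}" using uv xin by auto
      have IS: "Inf K = u" "Sup K = v" using uv' by auto
      have sb: "K \<subseteq> ball x (d x)" using p(2) xK unfolding fine_def g_def by blast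
      have uvK: "u \<in> K" "v \<in> K" using uv' by auto
      have cc: "Henstock_Kurzweil_Integration.content K = v - u" using uv' by simp
      have o: "a \<le> u" "v \<le> b" "u \<le> x" "x \<le> v" using uvK xin sub uv' by auto
      have bb: "u \<in> ball x (d x)" "v \<in> ball x (d x)" using sb uvK by blast+
      show ?thesis unfolding IS by (intro conjI uv'(2) o sb cc bb)
    qed
    define A where "A = {(x, K) \<in> p. x \<in> N \<and> Inf K < Sup K}"
    define B where "B = p - A"
    have finA: "finite A" using finp unfolding A_def by (rule rev_finite_subset) auto
    have finB: "finite B" using finp unfolding B_def by simp
    have AB: "p = A \<union> B" "A \<inter> B = {}" unfolding A_def B_def by auto
    have "F b - F a = (\<Sum>(x,K)\<in>p. F (Sup K) - F (Inf K))"
      using additive_tagged_division_1[OF ab pd, of F] by simp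
    then have "\<bar>F b - F a\<bar> \<le> (\<Sum>(x,K)\<in>p. \<bar>F (Sup K) - F (Inf K)\<bar>)"
      by (simp add: case_prod_beta sum_abs)
    also have "\<dots> = (\<Sum>(x,K)\<in>A. \<bar>F (Sup K) - F (Inf K)\<bar>) + (\<Sum>(x,K)\<in>B. \<bar>F (Sup K) - F (Inf K)\<bar>)"
      using AB finA finB by (simp add: sum.union_disjoint)
    also have "\<dots> \<le> e + e * (b - a)"
    proof (rule add_mono)
      show "(\<Sum>(x,K)\<in>B. \<bar>F (Sup K) - F (Inf K)\<bar>) \<le> e * (b - a)"
      proof -
        have "(\<Sum>(x,K)\<in>B. \<bar>F (Sup K) - F (Inf K)\<bar>) \<le> (\<Sum>(x,K)\<in>B. e * Henstock_Kurzweil_Integration.content K)"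
        proof (rule sum_mono)
          fix xK assume xKB: "xK \<in> B"
          obtain x K where xK: "xK = (x, K)" by fastforce
          have xKp: "(x, K) \<in> p" using xKB xK unfolding B_def by auto
          note KK = K[OF xKp]
          have cK: "Henstock_Kurzweil_Integration.content K = Sup K - Inf K" using KK by blast
          show "(case xK of (x, K) \<Rightarrow> \<bar>F (Sup K) - F (Inf K)\<bar>) \<le> (case xK of (x, K) \<Rightarrow> e * Henstock_Kurzweil_Integration.content K)"
          proof (cases "x \<in> N")
            case True
            then have "Inf K = Sup K" using xKB xK KK unfolding B_def A_def by auto
            then show ?thesis using xK cK by simp
          next
            case False
            have xab: "x \<in> {a..b}" using KK by auto
            have "Sup K \<in> ball x (d x)" "Inf K \<in> ball x (d x)" using KK by blast+
            then have s1: "\<bar>Sup K - x\<bar> < d x" "\<bar>Inf K - x\<bar> < d x"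
              by (auto simp: dist_real_def abs_minus_commute)
            have h1: "\<bar>F (Sup K) - F x\<bar> \<le> e * \<bar>Sup K - x\<bar>" by (rule d(3)[OF False xab s1(1)])
            have h2: "\<bar>F (Inf K) - F x\<bar> \<le> e * \<bar>Inf K - x\<bar>" by (rule d(3)[OF False xab s1(2)])
            have "\<bar>F (Sup K) - F (Inf K)\<bar> \<le> e * \<bar>Sup K - x\<bar> + e * \<bar>Inf K - x\<bar>"
              using h1 h2 by linarith
            also have "\<dots> = e * (Sup K - Inf K)" using KK by (simp add: algebra_simps)
            finally show ?thesis using xK cK by simp
          qed
        qed
        also have "\<dots> \<le> (\<Sum>(x,K)\<in>p. e * Henstock_Kurzweil_Integration.content K)"
          by (rule sum_mono2[OF finp]) (auto simp: B_def intro!: mult_nonneg_nonneg less_imp_le[OF e])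
        also have "\<dots> = e * (\<Sum>(x,K)\<in>p. Henstock_Kurzweil_Integration.content K)"
          by (simp add: sum_distrib_left case_prod_beta)
        also have "\<dots> = e * (b - a)"
          using additive_content_tagged_division[OF p(1)] ab by simp
        finally show ?thesis .
      qed
    next
      show "(\<Sum>(x,K)\<in>A. \<bar>F (Sup K) - F (Inf K)\<bar>) \<le> e"
      proof -
        obtain h where h: "bij_betw h {0..<card A} A" using ex_bij_betw_nat_finite[OF finA] by blast
        define n where "n = card A"
        define l where "l i = Inf (snd (h i))" for i
        define r where "r i = Sup (snd (h i))" for i
        have hA: "h i \<in> A" if "i < n" for i using h that unfolding n_def bij_betw_def by auto
        have hinj: "h i \<noteq> h j" if "i < n" "j < n" "i \<noteq> j" for i j
          using h that unfolding n_def bij_betw_def inj_on_def by auto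
        have hp: "h i \<in> p" "fst (h i) \<in> N" "l i < r i"
          "snd (h i) = {l i..r i}" "a \<le> l i" "r i \<le> b" "{l i..r i} \<subseteq> U" if "i < n" for i
        proof -
          obtain x K where xK: "h i = (x, K)" by fastforce
          have xKA: "(x, K) \<in> A" using hA[OF that] xK by simp
          then have xKp: "(x,K) \<in> p" and xN: "x \<in> N" and lt: "Inf K < Sup K" unfolding A_def by auto
          note KK = K[OF xKp]
          show "h i \<in> p" "fst (h i) \<in> N" "l i < r i" "snd (h i) = {l i..r i}" "a \<le> l i" "r i \<le> b"
            using xK xKp xN lt KK unfolding l_def r_def by auto
          show "{l i..r i} \<subseteq> U" using KK d(2)[OF xN] xK unfolding l_def r_def by auto
        qed
        have disj: "r i \<le> l j \<or> r j \<le> l i" if ij: "i < n" "j < n" "i \<noteq> j" for i j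
        proof (rule ccontr)
          assume nn: "\<not> (r i \<le> l j \<or> r j \<le> l i)"
          have "interior (snd (h i)) \<inter> interior (snd (h j)) = {}"
            using tagged_division_ofD(5)[OF pd, of "fst (h i)" "snd (h i)" "fst (h j)" "snd (h j)"]
              hp(1)[OF ij(1)] hp(1)[OF ij(2)] hinj[OF ij] by auto
          then have "{l i<..<r i} \<inter> {l j<..<r j} = {}" using hp(4) ij by simp
          moreover have "(max (l i) (l j) + min (r i) (r j)) / 2 \<in> {l i<..<r i} \<inter> {l j<..<r j}"
            using nn hp(3)[OF ij(1)] hp(3)[OF ij(2)] by auto
          ultimately show False by blast
        qed
        have lens: "(\<Sum>i<n. r i - l i) < \<delta>"
        proof -
          have "(\<Sum>i<n. r i - l i) = (\<Sum>i<n. measure lebesgue {l i..r i})"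
          proof (intro sum.cong refl)
            fix i assume "i \<in> {..<n}"
            then have "l i \<le> r i" using hp(3) by (simp add: less_imp_le)
            then show "r i - l i = measure lebesgue {l i..r i}" by simp
          qed
          also have "\<dots> = measure lebesgue (\<Union>i\<in>{..<n}. {l i..r i})"
          proof (rule measure_negligible_finite_Union_image[symmetric])
            show "pairwise (\<lambda>i j. negligible ({l i..r i} \<inter> {l j..r j})) {..<n}"
            unfolding pairwise_def
            proof (intro ballI impI)
              fix i j assume ij0: "i \<in> {..<n}" "j \<in> {..<n}" "i \<noteq> j"
              then have ij: "i < n" "j < n" "i \<noteq> j" by auto
              have "{l i..r i} \<inter> {l j..r j} \<subseteq> {r i, r j}"
                using disj[OF ij] by auto
              then show "negligible ({l i..r i} \<inter> {l j..r j})"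
                by (rule negligible_subset[rotated]) (simp add: negligible_insert)
            qed
          qed auto
          also have "\<dots> \<le> measure lebesgue U"
            by (rule measure_mono_fmeasurable) (use hp(7) U(3) in auto)
          finally show ?thesis using U(4) by linarith
        qed
        have "(\<Sum>i<n. \<bar>F (r i) - F (l i)\<bar>) < e"
          by (rule acd) (use hp disj lens in \<open>auto intro: less_imp_le\<close>)
        moreover have "(\<Sum>i<n. \<bar>F (r i) - F (l i)\<bar>) = (\<Sum>(x,K)\<in>A. \<bar>F (Sup K) - F (Inf K)\<bar>)"
          unfolding l_def r_def using sum.reindex_bij_betw[OF h, of "\<lambda>(x,K). \<bar>F (Sup K) - F (Inf K)\<bar>"]
          by (simp add: n_def lessThan_atLeast0 case_prod_beta)
        ultimately show ?thesis by linarith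
      qed
    qed
    also have "\<dots> = e * (b - a + 1)" by (simp add: algebra_simps)
    finally show ?thesis .
  qed
  show ?thesis
  proof (rule ccontr)
    assume ne: "F b \<noteq> F a"
    define e where "e = \<bar>F b - F a\<bar> / (2 * (b - a + 1))"
    have pos: "b - a + 1 > 0" using ab by simp
    have "e > 0" using ne pos unfolding e_def by simp
    have "e * (b - a + 1) = \<bar>F b - F a\<bar> / 2" unfolding e_def using pos by (simp add: field_simps)
    with main[OF \<open>e > 0\<close>] have "\<bar>F b - F a\<bar> \<le> \<bar>F b - F a\<bar> / 2" by simp
    then show False using ne by simp
  qed
qed


lemma abs_cont_on_sub:
  assumes "abs_cont_on f a b" "c \<le> b"
  shows "abs_cont_on f a c"
  unfolding abs_cont_on_def
proof (intro allI impI)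
  fix e :: real assume e: "e > 0"
  obtain \<delta> where \<delta>: "\<delta> > 0" and acd: "\<And>(n::nat) l r.
        (\<forall>i<n. a \<le> l i \<and> l i \<le> r i \<and> r i \<le> b) \<Longrightarrow>
        (\<forall>i<n. \<forall>j<n. i \<noteq> j \<longrightarrow> r i \<le> l j \<or> r j \<le> l i) \<Longrightarrow>
        (\<Sum>i<n. r i - l i) < \<delta> \<Longrightarrow>
        (\<Sum>i<n. \<bar>f (r i) - f (l i)\<bar>) < e"
    using acD[OF assms(1) e] by blast
  show "\<exists>\<delta>>0. \<forall>(n::nat) l r.
        (\<forall>i<n. a \<le> l i \<and> l i \<le> r i \<and> r i \<le> c) \<longrightarrow>
        (\<forall>i<n. \<forall>j<n. i \<noteq> j \<longrightarrow> r i \<le> l j \<or> r j \<le> l i) \<longrightarrow>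
        (\<Sum>i<n. r i - l i) < \<delta> \<longrightarrow>
        (\<Sum>i<n. \<bar>f (r i) - f (l i)\<bar>) < e"
  proof (intro exI[of _ \<delta>] conjI allI impI \<delta>)
    fix n :: nat and l r :: "nat \<Rightarrow> real"
    assume h: "\<forall>i<n. a \<le> l i \<and> l i \<le> r i \<and> r i \<le> c"
      "\<forall>i<n. \<forall>j<n. i \<noteq> j \<longrightarrow> r i \<le> l j \<or> r j \<le> l i" "(\<Sum>i<n. r i - l i) < \<delta>"
    have "\<forall>i<n. a \<le> l i \<and> l i \<le> r i \<and> r i \<le> b" using h(1) assms(2) by force
    then show "(\<Sum>i<n. \<bar>f (r i) - f (l i)\<bar>) < e" using acd h(2,3) by blast
  qed
qed

lemma abs_cont_on_cont:
  assumes "abs_cont_on f a b"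
  shows "continuous_on {a..b} f"
  unfolding continuous_on_iff
proof (intro ballI allI impI)
  fix x e :: real assume x: "x \<in> {a..b}" and e: "e > 0"
  obtain \<delta> where \<delta>: "\<delta> > 0" and acd: "\<And>(n::nat) l r.
        (\<forall>i<n. a \<le> l i \<and> l i \<le> r i \<and> r i \<le> b) \<Longrightarrow>
        (\<forall>i<n. \<forall>j<n. i \<noteq> j \<longrightarrow> r i \<le> l j \<or> r j \<le> l i) \<Longrightarrow>
        (\<Sum>i<n. r i - l i) < \<delta> \<Longrightarrow>
        (\<Sum>i<n. \<bar>f (r i) - f (l i)\<bar>) < e"
    using acD[OF assms(1) e] by blast
  show "\<exists>d>0. \<forall>x'\<in>{a..b}. dist x' x < d \<longrightarrow> dist (f x') (f x) < e"
  proof (intro exI[of _ \<delta>] conjI ballI impI \<delta>)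
    fix y assume y: "y \<in> {a..b}" and d: "dist y x < \<delta>"
    have "(\<Sum>i<Suc 0. \<bar>f ((\<lambda>_. max x y) i) - f ((\<lambda>_. min x y) i)\<bar>) < e"
      by (rule acd) (use x y d in \<open>auto simp: dist_real_def\<close>)
    then have "\<bar>f (max x y) - f (min x y)\<bar> < e" by simp
    then show "dist (f y) (f x) < e"
      by (cases "x \<le> y") (auto simp: dist_real_def max_def min_def abs_minus_commute)
  qed
qed

lemma abs_cont_on_bound:
  assumes "abs_cont_on f a b"
  obtains M where "M \<ge> 0" "\<And>t. t \<in> {a..b} \<Longrightarrow> \<bar>f t\<bar> \<le> M"
proof -
  have "compact (f ` {a..b})"
    by (rule compact_continuous_image[OF abs_cont_on_cont[OF assms]]) simp
  then obtain M where "\<forall>y\<in>f ` {a..b}. norm y \<le> M" 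
    using compact_imp_bounded bounded_iff by blast
  then have "\<bar>f t\<bar> \<le> max M 0" if "t \<in> {a..b}" for t
  proof -
    have "norm (f t) \<le> M" using \<open>\<forall>y\<in>f ` {a..b}. norm y \<le> M\<close> that by blast
    then show ?thesis by simp
  qed
  then show ?thesis using that[of "max M 0"] by simp
qed

lemma abs_cont_on_add:
  assumes f: "abs_cont_on f a b" and g: "abs_cont_on g a b"
  shows "abs_cont_on (\<lambda>t. f t + g t) a b"
  unfolding abs_cont_on_def
proof (intro allI impI)
  fix e :: real assume e: "e > 0"
  then have e2: "e / 2 > 0" by simp
  obtain \<delta>1 where \<delta>1: "\<delta>1 > 0" and acf: "\<And>(n::nat) l r.
        (\<forall>i<n. a \<le> l i \<and> l i \<le> r i \<and> r i \<le> b) \<Longrightarrow>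
        (\<forall>i<n. \<forall>j<n. i \<noteq> j \<longrightarrow> r i \<le> l j \<or> r j \<le> l i) \<Longrightarrow>
        (\<Sum>i<n. r i - l i) < \<delta>1 \<Longrightarrow>
        (\<Sum>i<n. \<bar>f (r i) - f (l i)\<bar>) < e / 2"
    using acD[OF f e2] by blast
  obtain \<delta>2 where \<delta>2: "\<delta>2 > 0" and acg: "\<And>(n::nat) l r.
        (\<forall>i<n. a \<le> l i \<and> l i \<le> r i \<and> r i \<le> b) \<Longrightarrow>
        (\<forall>i<n. \<forall>j<n. i \<noteq> j \<longrightarrow> r i \<le> l j \<or> r j \<le> l i) \<Longrightarrow>
        (\<Sum>i<n. r i - l i) < \<delta>2 \<Longrightarrow>
        (\<Sum>i<n. \<bar>g (r i) - g (l i)\<bar>) < e / 2"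
    using acD[OF g e2] by blast
  show "\<exists>\<delta>>0. \<forall>(n::nat) l r.
        (\<forall>i<n. a \<le> l i \<and> l i \<le> r i \<and> r i \<le> b) \<longrightarrow>
        (\<forall>i<n. \<forall>j<n. i \<noteq> j \<longrightarrow> r i \<le> l j \<or> r j \<le> l i) \<longrightarrow>
        (\<Sum>i<n. r i - l i) < \<delta> \<longrightarrow>
        (\<Sum>i<n. \<bar>(f (r i) + g (r i)) - (f (l i) + g (l i))\<bar>) < e"
  proof (intro exI[of _ "min \<delta>1 \<delta>2"] conjI allI impI)
    show "min \<delta>1 \<delta>2 > 0" using \<delta>1 \<delta>2 by simp
    fix n :: nat and l r :: "nat \<Rightarrow> real"
    assume h: "\<forall>i<n. a \<le> l i \<and> l i \<le> r i \<and> r i \<le> b"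
      "\<forall>i<n. \<forall>j<n. i \<noteq> j \<longrightarrow> r i \<le> l j \<or> r j \<le> l i" "(\<Sum>i<n. r i - l i) < min \<delta>1 \<delta>2"
    have A: "(\<Sum>i<n. \<bar>f (r i) - f (l i)\<bar>) < e / 2" using acf h by simp
    have B: "(\<Sum>i<n. \<bar>g (r i) - g (l i)\<bar>) < e / 2" using acg h by simp
    have "(\<Sum>i<n. \<bar>(f (r i) + g (r i)) - (f (l i) + g (l i))\<bar>)
        \<le> (\<Sum>i<n. \<bar>f (r i) - f (l i)\<bar> + \<bar>g (r i) - g (l i)\<bar>)"
      by (rule sum_mono) linarith
    also have "\<dots> = (\<Sum>i<n. \<bar>f (r i) - f (l i)\<bar>) + (\<Sum>i<n. \<bar>g (r i) - g (l i)\<bar>)"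
      by (rule sum.distrib)
    finally show "(\<Sum>i<n. \<bar>(f (r i) + g (r i)) - (f (l i) + g (l i))\<bar>) < e" using A B by linarith
  qed
qed

lemma abs_cont_on_mult:
  assumes f: "abs_cont_on f a b" and g: "abs_cont_on g a b"
  shows "abs_cont_on (\<lambda>t. f t * g t) a b"
  unfolding abs_cont_on_def
proof (intro allI impI)
  fix e :: real assume e: "e > 0"
  obtain Mf where Mf: "Mf \<ge> 0" "\<And>t. t \<in> {a..b} \<Longrightarrow> \<bar>f t\<bar> \<le> Mf" using abs_cont_on_bound[OF f] by blast
  obtain Mg where Mg: "Mg \<ge> 0" "\<And>t. t \<in> {a..b} \<Longrightarrow> \<bar>g t\<bar> \<le> Mg" using abs_cont_on_bound[OF g] by blast
  have e1: "e / (2 * (Mg + 1)) > 0" using e Mg by simp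
  have e2: "e / (2 * (Mf + 1)) > 0" using e Mf by simp
  obtain \<delta>1 where \<delta>1: "\<delta>1 > 0" and acf: "\<And>(n::nat) l r.
        (\<forall>i<n. a \<le> l i \<and> l i \<le> r i \<and> r i \<le> b) \<Longrightarrow>
        (\<forall>i<n. \<forall>j<n. i \<noteq> j \<longrightarrow> r i \<le> l j \<or> r j \<le> l i) \<Longrightarrow>
        (\<Sum>i<n. r i - l i) < \<delta>1 \<Longrightarrow>
        (\<Sum>i<n. \<bar>f (r i) - f (l i)\<bar>) < e / (2 * (Mg + 1))"
    using acD[OF f e1] by blast
  obtain \<delta>2 where \<delta>2: "\<delta>2 > 0" and acg: "\<And>(n::nat) l r.
        (\<forall>i<n. a \<le> l i \<and> l i \<le> r i \<and> r i \<le> b) \<Longrightarrow>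
        (\<forall>i<n. \<forall>j<n. i \<noteq> j \<longrightarrow> r i \<le> l j \<or> r j \<le> l i) \<Longrightarrow>
        (\<Sum>i<n. r i - l i) < \<delta>2 \<Longrightarrow>
        (\<Sum>i<n. \<bar>g (r i) - g (l i)\<bar>) < e / (2 * (Mf + 1))"
    using acD[OF g e2] by blast
  show "\<exists>\<delta>>0. \<forall>(n::nat) l r.
        (\<forall>i<n. a \<le> l i \<and> l i \<le> r i \<and> r i \<le> b) \<longrightarrow>
        (\<forall>i<n. \<forall>j<n. i \<noteq> j \<longrightarrow> r i \<le> l j \<or> r j \<le> l i) \<longrightarrow>
        (\<Sum>i<n. r i - l i) < \<delta> \<longrightarrow>
        (\<Sum>i<n. \<bar>f (r i) * g (r i) - f (l i) * g (l i)\<bar>) < e"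
  proof (intro exI[of _ "min \<delta>1 \<delta>2"] conjI allI impI)
    show "min \<delta>1 \<delta>2 > 0" using \<delta>1 \<delta>2 by simp
    fix n :: nat and l r :: "nat \<Rightarrow> real"
    assume h: "\<forall>i<n. a \<le> l i \<and> l i \<le> r i \<and> r i \<le> b"
      "\<forall>i<n. \<forall>j<n. i \<noteq> j \<longrightarrow> r i \<le> l j \<or> r j \<le> l i" "(\<Sum>i<n. r i - l i) < min \<delta>1 \<delta>2"
    have A: "(\<Sum>i<n. \<bar>f (r i) - f (l i)\<bar>) < e / (2 * (Mg + 1))" using acf h by simp
    have B: "(\<Sum>i<n. \<bar>g (r i) - g (l i)\<bar>) < e / (2 * (Mf + 1))" using acg h by simp
    have "(\<Sum>i<n. \<bar>f (r i) * g (r i) - f (l i) * g (l i)\<bar>)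
        \<le> (\<Sum>i<n. Mf * \<bar>g (r i) - g (l i)\<bar> + Mg * \<bar>f (r i) - f (l i)\<bar>)"
    proof (rule sum_mono)
      fix i assume "i \<in> {..<n}"
      then have ri: "r i \<in> {a..b}" and li: "l i \<in> {a..b}" using h(1) by auto
      have "f (r i) * g (r i) - f (l i) * g (l i) = f (r i) * (g (r i) - g (l i)) + g (l i) * (f (r i) - f (l i))"
        by (simp add: algebra_simps)
      then have "\<bar>f (r i) * g (r i) - f (l i) * g (l i)\<bar> \<le> \<bar>f (r i)\<bar> * \<bar>g (r i) - g (l i)\<bar> + \<bar>g (l i)\<bar> * \<bar>f (r i) - f (l i)\<bar>"
        by (simp add: abs_mult[symmetric] abs_triangle_ineq)
      also have "\<dots> \<le> Mf * \<bar>g (r i) - g (l i)\<bar> + Mg * \<bar>f (r i) - f (l i)\<bar>"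
        by (intro add_mono mult_right_mono Mf(2)[OF ri] Mg(2)[OF li]) auto
      finally show "\<bar>f (r i) * g (r i) - f (l i) * g (l i)\<bar> \<le> Mf * \<bar>g (r i) - g (l i)\<bar> + Mg * \<bar>f (r i) - f (l i)\<bar>" .
    qed
    also have "\<dots> = Mf * (\<Sum>i<n. \<bar>g (r i) - g (l i)\<bar>) + Mg * (\<Sum>i<n. \<bar>f (r i) - f (l i)\<bar>)"
      by (simp add: sum.distrib sum_distrib_left)
    also have "\<dots> \<le> Mf * (e / (2 * (Mf + 1))) + Mg * (e / (2 * (Mg + 1)))"
      using A B Mf(1) Mg(1) by (intro add_mono mult_left_mono) auto
    also have "\<dots> < e"
    proof -
      have "Mf * (e / (2 * (Mf + 1))) < e / 2" using Mf(1) e by (simp add: field_simps)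
      moreover have "Mg * (e / (2 * (Mg + 1))) < e / 2" using Mg(1) e by (simp add: field_simps)
      ultimately show ?thesis by linarith
    qed
    finally show "(\<Sum>i<n. \<bar>f (r i) * g (r i) - f (l i) * g (l i)\<bar>) < e" .
  qed
qed



lemma derivs:
  fixes w t :: real
  assumes
    d1: "(bX has_real_derivative (- w * cY t - uZ t * bY t + uY t * bZ t)) (at t)" and
    d2: "(bY has_real_derivative (w * cX t + uZ t * bX t - uX t * bZ t)) (at t)" and
    d3: "(bZ has_real_derivative (uX t * bY t - uY t * bX t)) (at t)" and
    d4: "(cX has_real_derivative (- w * bY t + uY t * cZ t - uZ t * cY t)) (at t)" and
    d5: "(cY has_real_derivative (w * bX t - uX t * cZ t + uZ t * cX t)) (at t)" and
    d6: "(cZ has_real_derivative (uX t * cY t - uY t * cX t)) (at t)"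
  shows "((\<lambda>s. bX s * bX s + cX s * cX s + bY s * bY s + cY s * cY s + bZ s * bZ s + cZ s * cZ s)
            has_real_derivative 0) (at t)"
    and "((\<lambda>s. bX s * cX s + bY s * cY s + bZ s * cZ s) has_real_derivative 0) (at t)"
proof -
  show "((\<lambda>s. bX s * bX s + cX s * cX s + bY s * bY s + cY s * cY s + bZ s * bZ s + cZ s * cZ s)
            has_real_derivative 0) (at t)"
    apply (rule DERIV_cong)
     apply (rule DERIV_add DERIV_mult d1 d2 d3 d4 d5 d6)+
    apply (simp add: algebra_simps)
    done
  show "((\<lambda>s. bX s * cX s + bY s * cY s + bZ s * cZ s) has_real_derivative 0) (at t)"
    apply (rule DERIV_cong)
     apply (rule DERIV_add DERIV_mult d1 d2 d3 d4 d5 d6)+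
    apply (simp add: algebra_simps)
    done
qed


theorem proposition2:
  fixes \<omega>0 t0 t1 :: real
    and uX uY uZ bX bY bZ cX cY cZ :: "real \<Rightarrow> real"
  assumes "\<omega>0 \<noteq> 0"
    and "t0 \<le> t1"
    and "uX \<in> borel_measurable borel" "uY \<in> borel_measurable borel" "uZ \<in> borel_measurable borel"
    and "bounded (range uX)" "bounded (range uY)" "bounded (range uZ)"
    and "abs_cont_on bX t0 t1" "abs_cont_on bY t0 t1" "abs_cont_on bZ t0 t1"
    and "abs_cont_on cX t0 t1" "abs_cont_on cY t0 t1" "abs_cont_on cZ t0 t1"
    and "AE t in lebesgue. t \<in> {t0..t1} \<longrightarrow>
           (bX has_real_derivative (- \<omega>0 * cY t - uZ t * bY t + uY t * bZ t)) (at t) \<and>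
           (bY has_real_derivative (\<omega>0 * cX t + uZ t * bX t - uX t * bZ t)) (at t) \<and>
           (bZ has_real_derivative (uX t * bY t - uY t * bX t)) (at t) \<and>
           (cX has_real_derivative (- \<omega>0 * bY t + uY t * cZ t - uZ t * cY t)) (at t) \<and>
           (cY has_real_derivative (\<omega>0 * bX t - uX t * cZ t + uZ t * cX t)) (at t) \<and>
           (cZ has_real_derivative (uX t * cY t - uY t * cX t)) (at t)"
  shows "\<forall>t\<in>{t0..t1}.
      \<omega>0^2 / 2 * ((bX t)^2 + (cX t)^2 + (bY t)^2 + (cY t)^2 + (bZ t)^2 + (cZ t)^2)
        = \<omega>0^2 / 2 * ((bX t0)^2 + (cX t0)^2 + (bY t0)^2 + (cY t0)^2 + (bZ t0)^2 + (cZ t0)^2)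
    \<and> \<omega>0 * (bX t * cX t + bY t * cY t + bZ t * cZ t)
        = \<omega>0 * (bX t0 * cX t0 + bY t0 * cY t0 + bZ t0 * cZ t0)"
proof -
  define D where "D t \<longleftrightarrow>
           (bX has_real_derivative (- \<omega>0 * cY t - uZ t * bY t + uY t * bZ t)) (at t) \<and>
           (bY has_real_derivative (\<omega>0 * cX t + uZ t * bX t - uX t * bZ t)) (at t) \<and>
           (bZ has_real_derivative (uX t * bY t - uY t * bX t)) (at t) \<and>
           (cX has_real_derivative (- \<omega>0 * bY t + uY t * cZ t - uZ t * cY t)) (at t) \<and>
           (cY has_real_derivative (\<omega>0 * bX t - uX t * cZ t + uZ t * cX t)) (at t) \<and>
           (cZ has_real_derivative (uX t * cY t - uY t * cX t)) (at t)" for t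
  have "AE t in lebesgue. t \<in> {t0..t1} \<longrightarrow> D t" using assms(15) unfolding D_def .
  then obtain N where N: "N \<in> null_sets lebesgue"
    and sub: "{x \<in> space lebesgue. \<not> (x \<in> {t0..t1} \<longrightarrow> D x)} \<subseteq> N"
    unfolding eventually_ae_filter by blast
  have DN: "D t" if "t \<in> {t0..t1}" "t \<notin> N" for t using sub that by auto
  define P where "P s = bX s * bX s + cX s * cX s + bY s * bY s + cY s * cY s + bZ s * bZ s + cZ s * cZ s" for s
  define L where "L s = bX s * cX s + bY s * cY s + bZ s * cZ s" for s
  have dP: "(P has_real_derivative 0) (at t)" and dL: "(L has_real_derivative 0) (at t)"
    if "t \<in> {t0..t1}" "t \<notin> N" for t
  proof -
    have "D t" using DN that .
    then have d: "(bX has_real_derivative (- \<omega>0 * cY t - uZ t * bY t + uY t * bZ t)) (at t)"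
           "(bY has_real_derivative (\<omega>0 * cX t + uZ t * bX t - uX t * bZ t)) (at t)"
           "(bZ has_real_derivative (uX t * bY t - uY t * bX t)) (at t)"
           "(cX has_real_derivative (- \<omega>0 * bY t + uY t * cZ t - uZ t * cY t)) (at t)"
           "(cY has_real_derivative (\<omega>0 * bX t - uX t * cZ t + uZ t * cX t)) (at t)"
           "(cZ has_real_derivative (uX t * cY t - uY t * cX t)) (at t)"
      unfolding D_def by blast+
    have PP: "P = (\<lambda>s. bX s * bX s + cX s * cX s + bY s * bY s + cY s * cY s + bZ s * bZ s + cZ s * cZ s)"
      unfolding P_def by (rule refl)
    have LL: "L = (\<lambda>s. bX s * cX s + bY s * cY s + bZ s * cZ s)"
      unfolding L_def by (rule refl)
    show "(P has_real_derivative 0) (at t)" unfolding PP by (rule derivs(1)[where bX=bX and bY=bY and bZ=bZ and cX=cX and cY=cY and cZ=cZ and uX=uX and uY=uY and uZ=uZ and w=\<omega>0 and t=t, OF d])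
    show "(L has_real_derivative 0) (at t)" unfolding LL by (rule derivs(2)[where bX=bX and bY=bY and bZ=bZ and cX=cX and cY=cY and cZ=cZ and uX=uX and uY=uY and uZ=uZ and w=\<omega>0 and t=t, OF d])
  qed
  have acP: "abs_cont_on P t0 t1" unfolding P_def
    by (intro abs_cont_on_add abs_cont_on_mult assms(9-14))
  have acL: "abs_cont_on L t0 t1" unfolding L_def
    by (intro abs_cont_on_add abs_cont_on_mult assms(9-14))
  show ?thesis
  proof
    fix t assume t: "t \<in> {t0..t1}"
    then have tt: "t0 \<le> t" "t \<le> t1" by auto
    have "P t = P t0"
      by (rule ac_zero_deriv_const[OF tt(1) abs_cont_on_sub[OF acP tt(2)] N]) (use t dP in auto)
    moreover have "L t = L t0"
      by (rule ac_zero_deriv_const[OF tt(1) abs_cont_on_sub[OF acL tt(2)] N]) (use t dL in auto)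
    ultimately show "\<omega>0^2 / 2 * ((bX t)^2 + (cX t)^2 + (bY t)^2 + (cY t)^2 + (bZ t)^2 + (cZ t)^2)
        = \<omega>0^2 / 2 * ((bX t0)^2 + (cX t0)^2 + (bY t0)^2 + (cY t0)^2 + (bZ t0)^2 + (cZ t0)^2)
    \<and> \<omega>0 * (bX t * cX t + bY t * cY t + bZ t * cZ t)
        = \<omega>0 * (bX t0 * cX t0 + bY t0 * cY t0 + bZ t0 * cZ t0)"
      unfolding P_def L_def by (simp add: power2_eq_square)
  qed
qed

end
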